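(* Let $G=(K\cup I,E)$ be a split graph and $(V,\mathcal{F})$ the split graph vertex shelling antimatroid defined on $G$. Let $u,v$ be distinct elements of $V$. Then $V\setminus\{u,v\}\in\mathcal{F}$ if and only if $u\sim v$, or at least one of $u,v$ is isolated in $G$.
   Context: A split graph $G=(K\cup I,E)$ is a finite simple graph whose vertex set $V=K\cup I$ comes with a fixed partition into a clique $K$ and an independent set $I$. We write $u\sim v$ if $u,v$ are adjacent; a vertex is isolated if it has no neighbours. A vertex is simplicial if its neighbours induce a clique. The split graph vertex shelling antimatroid of $G$ is $(V,\mathcal{F})$ where $F\subseteq V$ is feasible iff there is an ordering $f_1,\dots,f_{|F|}$ of $F$ such that each $f_j$ is simplicial in $G$ minus $\{f_1,\dots,f_{j-1}\}$ (the empty set is feasible). *)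

theory Defs
  imports Main
begin

definition split_graph :: "'a set \<Rightarrow> 'a set \<Rightarrow> ('a \<Rightarrow> 'a \<Rightarrow> bool) \<Rightarrow> bool" where
  "split_graph K I E \<longleftrightarrow>
     finite (K \<union> I) \<and> K \<inter> I = {} \<and>
     (\<forall>u v. E u v \<longrightarrow> u \<in> K \<union> I \<and> v \<in> K \<union> I) \<and>
     (\<forall>u v. E u v \<longrightarrow> E v u) \<and> (\<forall>u. \<not> E u u) \<and>
     (\<forall>u\<in>K. \<forall>v\<in>K. u \<noteq> v \<longrightarrow> E u v) \<and>
     (\<forall>u\<in>I. \<forall>v\<in>I. \<not> E u v)"

definition simplicial_in :: "'a set \<Rightarrow> ('a \<Rightarrow> 'a \<Rightarrow> bool) \<Rightarrow> 'a \<Rightarrow> bool" where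
  "simplicial_in W E x \<longleftrightarrow> x \<in> W \<and>
     (\<forall>y\<in>W. \<forall>z\<in>W. E x y \<and> E x z \<and> y \<noteq> z \<longrightarrow> E y z)"

definition shelling_feasible :: "'a set \<Rightarrow> ('a \<Rightarrow> 'a \<Rightarrow> bool) \<Rightarrow> 'a set \<Rightarrow> bool" where
  "shelling_feasible V E F \<longleftrightarrow>
     (\<exists>fs. distinct fs \<and> set fs = F \<and>
        (\<forall>j < length fs. simplicial_in (V - set (take j fs)) E (fs ! j)))"

definition isolated :: "('a \<Rightarrow> 'a \<Rightarrow> bool) \<Rightarrow> 'a \<Rightarrow> bool" where
  "isolated E u \<longleftrightarrow> (\<forall>w. \<not> E u w)"

end

theory Submission
  imports Defs
begin

lemma simp_mono: "simplicial_in W E x \<Longrightarrow> W' \<subseteq> W \<Longrightarrow> x \<in> W' \<Longrightarrow> simplicial_in W' E x"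
  unfolding simplicial_in_def by blast

lemma nth_notin_take: "distinct fs \<Longrightarrow> j < length fs \<Longrightarrow> i \<le> j \<Longrightarrow> fs ! j \<notin> set (take i fs)"
proof
  assume d: "distinct fs" and j: "j < length fs" and ij: "i \<le> j" and m: "fs ! j \<in> set (take i fs)"
  then obtain k where k: "k < length (take i fs)" "take i fs ! k = fs ! j" by (auto simp: in_set_conv_nth)
  hence "k < i" "fs ! k = fs ! j" by auto
  with d j ij show False using nth_eq_iff_index_eq by (metis le_less_trans less_imp_le_nat nat_neq_iff order_less_trans)
qed

lemma common_nb:
  assumes d: "distinct fs" and s: "set fs = V - {u, v}"
    and ok: "\<forall>j<length fs. simplicial_in (V - set (take j fs)) E (fs ! j)"
    and x: "x \<in> V - {u,v}" and uV: "u \<in> V" and vV: "v \<in> V" and uv: "u \<noteq> v"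
    and a: "E x u" "E x v"
  shows "E u v"
proof -
  from x s obtain i where i: "i < length fs" "fs ! i = x" by (metis in_set_conv_nth)
  have "u \<in> V - set (take i fs)" "v \<in> V - set (take i fs)" using uV vV s set_take_subset by fastforce+
  with ok i a uv show ?thesis unfolding simplicial_in_def by blast
qed

lemma forward:
  assumes sg: "split_graph K I E"
    and u: "u \<in> K \<union> I" and v: "v \<in> K \<union> I" and uv: "u \<noteq> v"
    and f: "shelling_feasible (K \<union> I) E ((K \<union> I) - {u, v})"
  shows "E u v \<or> isolated E u \<or> isolated E v"
proof (rule ccontr)
  let ?V = "K \<union> I"
  assume "\<not> ?thesis"
  hence nuv: "\<not> E u v" and iu: "\<not> isolated E u" and iv: "\<not> isolated E v" by auto
  from f obtain fs where d: "distinct fs" and s: "set fs = ?V - {u, v}"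
    and ok: "\<forall>j<length fs. simplicial_in (?V - set (take j fs)) E (fs ! j)"
    unfolding shelling_feasible_def by blast
  have inV: "\<And>a b. E a b \<Longrightarrow> a \<in> ?V \<and> b \<in> ?V" and sym: "\<And>a b. E a b \<Longrightarrow> E b a"
    and irr: "\<And>a. \<not> E a a" and KK: "\<And>a b. a \<in> K \<Longrightarrow> b \<in> K \<Longrightarrow> a \<noteq> b \<Longrightarrow> E a b"
    and II: "\<And>a b. a \<in> I \<Longrightarrow> b \<in> I \<Longrightarrow> \<not> E a b" and KI: "K \<inter> I = {}"
    using sg unfolding split_graph_def by blast+
  have IK: "\<And>a b. a \<in> I \<Longrightarrow> E a b \<Longrightarrow> b \<in> K" using inV II by blast
  from iu obtain nu where nu: "E u nu" unfolding isolated_def by blast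
  from iv obtain nv where nv: "E v nv" unfolding isolated_def by blast
  have cn: "\<And>x. x \<in> ?V - {u,v} \<Longrightarrow> E x u \<Longrightarrow> E x v \<Longrightarrow> E u v"
    using common_nb[OF d s ok _ u v uv] by blast
  show False
  proof (cases "u \<in> K")
    case uK: True
    show False
    proof (cases "v \<in> K")
      case True thus False using uK KK uv nuv by blast
    next
      case False
      hence vI: "v \<in> I" using v by blast
      have "nv \<in> K" using IK vI nv by blast
      moreover have "nv \<noteq> u" using nv nuv sym by blast
      moreover have "nv \<noteq> v" using nv irr by blast
      ultimately show False using cn[of nv] KK uK nv sym nuv by blast
    qed
  next
    case uN: False
    hence uI: "u \<in> I" using u by blast
    have nuK: "nu \<in> K" using IK uI nu by blast
    show False
    proof (cases "v \<in> K")
      case vK: True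
      have "nu \<noteq> v" using nu nuv by blast
      moreover have "nu \<noteq> u" using nu irr by blast
      ultimately show False using cn[of nu] KK vK nuK nu sym nuv by blast
    next
      case False
      hence vI: "v \<in> I" using v by blast
      have nvK: "nv \<in> K" using IK vI nv by blast
      have nuuv: "nu \<notin> {u,v}" and nvuv: "nv \<notin> {u,v}" using uI vI nuK nvK KI by blast+
      show False
      proof (cases "nu = nv")
        case True thus False using cn[of nu] nuuv nuK nu nv sym nuv by blast
      next
        case ne: False
        from nuuv nuK s obtain i where i: "i < length fs" "fs ! i = nu" by (metis Diff_iff UnCI in_set_conv_nth)
        from nvuv nvK s obtain j where j: "j < length fs" "fs ! j = nv" by (metis Diff_iff UnCI in_set_conv_nth)
        have uW: "\<And>k. u \<in> ?V - set (take k fs)" and vW: "\<And>k. v \<in> ?V - set (take k fs)"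
          using u v s set_take_subset by fastforce+
        show False
        proof (cases "i \<le> j")
          case True
          have "nv \<in> ?V - set (take i fs)" using nth_notin_take[OF d j(1) True] j nvK by auto
          moreover have "u \<noteq> nv" using uI nvK KI by blast
          ultimately have "E u nv" using ok i uW[of i] KK[OF nuK nvK ne] nu sym
            unfolding simplicial_in_def by blast
          thus False using cn[of nv] nvuv nvK nv sym nuv by blast
        next
          case False
          hence ji: "j \<le> i" by simp
          have "nu \<in> ?V - set (take j fs)" using nth_notin_take[OF d i(1) ji] i nuK by auto
          moreover have "v \<noteq> nu" using vI nuK KI by blast
          ultimately have "E v nu" using ok j vW[of j] KK[OF nvK nuK] ne nv sym
            unfolding simplicial_in_def by blast
          thus False using cn[of nu] nuuv nuK nu sym nuv by blast
        qed
      qed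
    qed
  qed
qed

lemma three_blocks:
  assumes d: "distinct (A @ B @ C)" and sV: "set (A @ B @ C) \<subseteq> V"
    and hA: "\<forall>x\<in>set A. simplicial_in V E x"
    and hB: "\<forall>x\<in>set B. simplicial_in (V - set A) E x"
    and hC: "\<forall>x\<in>set C. simplicial_in (V - set A - set B) E x"
  shows "\<forall>j<length (A @ B @ C). simplicial_in (V - set (take j (A @ B @ C))) E ((A @ B @ C) ! j)"
proof (intro allI impI)
  fix j assume j: "j < length (A @ B @ C)"
  let ?fs = "A @ B @ C"
  have xin: "?fs ! j \<in> V - set (take j ?fs)"
    using nth_notin_take[OF d j order_refl] sV j nth_mem by blast
  show "simplicial_in (V - set (take j ?fs)) E (?fs ! j)"
  proof (cases "j < length A")
    case True
    hence "?fs ! j \<in> set A" by (simp add: nth_append)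
    from hA[rule_format, OF this] show ?thesis by (rule simp_mono) (use xin in auto)
  next
    case F1: False
    show ?thesis
    proof (cases "j < length A + length B")
      case True
      hence "?fs ! j = B ! (j - length A)" using F1 by (auto simp: nth_append)
      hence inB: "?fs ! j \<in> set B" using F1 True by simp
      have "take j ?fs = A @ take (j - length A) (B @ C)" using F1 by (simp add: take_append)
      hence sub: "set A \<subseteq> set (take j ?fs)" by simp
      have "V - set (take j ?fs) \<subseteq> V - set A" using sub by blast
      from simp_mono[OF hB[rule_format, OF inB] this xin] show ?thesis .
    next
      case False
      hence "?fs ! j = C ! (j - length A - length B)" using F1 by (auto simp: nth_append)
      hence inC: "?fs ! j \<in> set C" using F1 False j by simp
      have eq: "take j ?fs = A @ B @ take (j - length A - length B) C" using F1 False by (simp add: take_append)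
      have sub: "set A \<union> set B \<subseteq> set (take j ?fs)" unfolding eq by auto
      have "V - set (take j ?fs) \<subseteq> V - set A - set B" using sub by blast
      from simp_mono[OF hC[rule_format, OF inC] this xin] show ?thesis .
    qed
  qed
qed

lemma backward:
  assumes sg: "split_graph K I E"
    and u: "u \<in> K \<union> I" and v: "v \<in> K \<union> I" and uv: "u \<noteq> v"
    and h: "E u v \<or> isolated E u \<or> isolated E v"
  shows "shelling_feasible (K \<union> I) E ((K \<union> I) - {u, v})"
proof -
  let ?V = "K \<union> I"
  have fin: "finite ?V" and inV: "\<And>a b. E a b \<Longrightarrow> a \<in> ?V \<and> b \<in> ?V" and sym: "\<And>a b. E a b \<Longrightarrow> E b a"
    and irr: "\<And>a. \<not> E a a" and KK: "\<And>a b. a \<in> K \<Longrightarrow> b \<in> K \<Longrightarrow> a \<noteq> b \<Longrightarrow> E a b"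
    and II: "\<And>a b. a \<in> I \<Longrightarrow> b \<in> I \<Longrightarrow> \<not> E a b" and KI: "K \<inter> I = {}"
    using sg unfolding split_graph_def by blast+
  have IK: "\<And>a b. a \<in> I \<Longrightarrow> E a b \<Longrightarrow> b \<in> K" using inV II by blast
  let ?Iu = "{u,v} \<inter> I"
  define SA where "SA = I - {u,v}"
  define SB where "SB = {k \<in> K - {u,v}. \<forall>i\<in>?Iu. \<not> E k i}"
  define SC where "SC = {k \<in> K - {u,v}. \<exists>i\<in>?Iu. E k i}"
  have fA: "finite SA" "finite SB" "finite SC" using fin unfolding SA_def SB_def SC_def by auto
  obtain A where A: "distinct A" "set A = SA" using finite_distinct_list[OF fA(1)] by blast
  obtain B where B: "distinct B" "set B = SB" using finite_distinct_list[OF fA(2)] by blast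
  obtain C where C: "distinct C" "set C = SC" using finite_distinct_list[OF fA(3)] by blast
  have d: "distinct (A @ B @ C)" using A B C KI unfolding SA_def SB_def SC_def by auto
  have st: "set (A @ B @ C) = ?V - {u,v}" using A B C unfolding SA_def SB_def SC_def by auto
  have hA: "\<forall>x\<in>set A. simplicial_in ?V E x"
  proof
    fix x assume "x \<in> set A"
    hence x: "x \<in> I" using A unfolding SA_def by auto
    have "E y z" if "y \<in> ?V" "z \<in> ?V" "E x y" "E x z" "y \<noteq> z" for y z
      using IK[OF x that(3)] IK[OF x that(4)] KK that(5) by blast
    thus "simplicial_in ?V E x" using x unfolding simplicial_in_def by blast
  qed
  have hB: "\<forall>x\<in>set B. simplicial_in (?V - set A) E x"
  proof
    fix x assume "x \<in> set B"
    hence x: "x \<in> K" "x \<notin> {u,v}" "\<forall>i\<in>?Iu. \<not> E x i" using B unfolding SB_def by auto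
    have "\<And>y. y \<in> ?V - set A \<Longrightarrow> E x y \<Longrightarrow> y \<in> K"
      using x A unfolding SA_def by blast
    thus "simplicial_in (?V - set A) E x" using x A KK KI unfolding simplicial_in_def SA_def by auto
  qed
  have hC: "\<forall>x\<in>set C. simplicial_in (?V - set A - set B) E x"
  proof
    fix x assume "x \<in> set C"
    hence x: "x \<in> K" "x \<notin> {u,v}" "\<exists>i\<in>?Iu. E x i" using C unfolding SC_def by auto
    have W: "?V - set A - set B \<subseteq> SC \<union> {u,v}" using A B unfolding SA_def SB_def SC_def by auto
    have "x \<in> ?V - set A - set B" using x A B KI unfolding SA_def SB_def by auto
    moreover have "E y z"
      if y: "y \<in> ?V - set A - set B" and z: "z \<in> ?V - set A - set B" and e: "E x y" "E x z" "y \<noteq> z" for y z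
    proof -
      have key: "E a b" if a: "a \<in> SC \<union> {u,v}" "a \<in> K" and b: "b \<in> {u,v}" "b \<in> I" and ea: "E x a" and eb: "E x b" and ab: "a \<noteq> b" for a b
      proof (cases "a \<in> {u,v}")
        case True
        hence "(a = u \<and> b = v) \<or> (a = v \<and> b = u)" using ab b by blast
        thus ?thesis using h ea eb sym unfolding isolated_def by blast
      next
        case False
        hence "a \<in> SC" using a by blast
        then obtain i where i: "i \<in> ?Iu" "E a i" unfolding SC_def by blast
        show ?thesis
        proof (cases "i = b")
          case True thus ?thesis using i by simp
        next
          case False
          hence "u \<in> I" "v \<in> I" "(i = u \<and> b = v) \<or> (i = v \<and> b = u)" using i b by blast+
          thus ?thesis using h i eb sym II unfolding isolated_def by blast
        qed
      qed
      have yW: "y \<in> SC \<union> {u,v}" and zW: "z \<in> SC \<union> {u,v}" using W y z by blast+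
      have yV: "y \<in> ?V" and zV: "z \<in> ?V" using y z by blast+
      show ?thesis
      proof (cases "y \<in> K")
        case yK: True
        show ?thesis
        proof (cases "z \<in> K")
          case True thus ?thesis using yK KK e by blast
        next
          case False
          hence "z \<in> {u,v}" "z \<in> I" using zV zW KI unfolding SC_def by blast+
          thus ?thesis using key[OF yW yK] e by blast
        qed
      next
        case yN: False
        hence yI: "y \<in> {u,v}" "y \<in> I" using yV yW unfolding SC_def by blast+
        show ?thesis
        proof (cases "z \<in> K")
          case True thus ?thesis using key[OF zW True yI] e sym by blast
        next
          case False
          hence zI: "z \<in> I" "z \<in> {u,v}" using zV zW unfolding SC_def by blast+
          hence "(y = u \<and> z = v) \<or> (y = v \<and> z = u)" using yI e(3) by blast
          thus ?thesis using h e sym yI zI II unfolding isolated_def by blast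
        qed
      qed
    qed
    ultimately show "simplicial_in (?V - set A - set B) E x" unfolding simplicial_in_def by blast
  qed
  have "\<forall>j<length (A @ B @ C). simplicial_in (?V - set (take j (A @ B @ C))) E ((A @ B @ C) ! j)"
    using three_blocks[OF d _ hA hB hC] st by blast
  thus ?thesis unfolding shelling_feasible_def using d st by blast
qed

theorem mainTheorem4:
  fixes K I :: "'a set" and E :: "'a \<Rightarrow> 'a \<Rightarrow> bool" and u v :: 'a
  assumes "split_graph K I E"
    and "u \<in> K \<union> I" and "v \<in> K \<union> I" and "u \<noteq> v"
  shows "shelling_feasible (K \<union> I) E ((K \<union> I) - {u, v}) \<longleftrightarrow>
           E u v \<or> isolated E u \<or> isolated E v"
  using forward[OF assms] backward[OF assms] by blast

end
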